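(* Let $G$ be a graph and let $S$ be a twin cover of $G$ with $|S|=k$. Let $\alpha$ and $\beta$ be two specification functions for $G$ and let $\sigma$ and $\pi$ be two clean layouts of $G$ that are similar with respect to $S$. If $\sigma$ and $\pi$ both respect $\alpha$ in count and $\beta$ in size, then $\mathcal{I}(\sigma)=\mathcal{I}(\pi)$.
   Context: All graphs are finite, simple and undirected; $n=|V(G)|$. For a layout (linear ordering) $\sigma$ of $V(G)$, $N_L(v,\sigma)$, $N_R(v,\sigma)$ are the neighbours of $v$ before/after $v$; $\mathcal{I}(v,\sigma)=\big||N_L(v,\sigma)|-|N_R(v,\sigma)|\big|$ and $\mathcal{I}(\sigma)=\sum_v\mathcal{I}(v,\sigma)$. A twin cover of $G$ is a set $S\subseteq V(G)$ such that every connected component $X$ of $G-S$ is a set of true twins ($N[u]=N[v]$ for $u,v\in X$); these components are called the cliques of $G-S$. The type of a clique $C$ is $N(v)\cap S$ for $v\in C$. A clique is large if it has more than $k$ vertices, small otherwise. Let $\mathcal{C}=(2^S\times\{0\}\times[k])\cup(2^S\times\{1\}\times\{e,o\})$; the class of a clique $C$ of type $T$ is $(T,1,o)$ if $C$ is large with $|C|$ odd, $(T,1,e)$ if $C$ is large with $|C|$ even, and $(T,0,j)$ if $C$ is small with $|C|=j$. A layout is clean if the vertices of each clique of $G-S$ appear consecutively; in a clean layout $\sigma$, the location of a clique $C$ is $|\{s\in S: s<_\sigma v\}|+1\in[k+1]$ for any $v\in C$. A specification function is a map $\mathcal{C}\times[k+1]\to\{0,1,\dots,n\}$. A clean layout $\sigma$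 respects $\alpha$ in count if for every $j\in[k+1]$ and $\nu\in\mathcal{C}$ the number of cliques of class $\nu$ at location $j$ is $\alpha(\nu,j)$, and respects $\beta$ in size if for every $j,\nu$ the total number of vertices in cliques of class $\nu$ at location $j$ is $\beta(\nu,j)$. Two layouts are similar with respect to $S$ if their restrictions to $S$ are the same ordering. *)

theory Defs
  imports Main
begin

definition graph :: "'a set \<Rightarrow> ('a \<Rightarrow> 'a \<Rightarrow> bool) \<Rightarrow> bool" where
  "graph V E \<longleftrightarrow> finite V \<and> (\<forall>u v. E u v \<longrightarrow> u \<in> V \<and> v \<in> V)
     \<and> (\<forall>u v. E u v \<longrightarrow> E v u) \<and> (\<forall>u. \<not> E u u)"

definition layout :: "'a set \<Rightarrow> 'a list \<Rightarrow> bool" where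
  "layout V \<sigma> \<longleftrightarrow> distinct \<sigma> \<and> set \<sigma> = V"

definition before :: "'a list \<Rightarrow> 'a \<Rightarrow> 'a \<Rightarrow> bool" where
  "before \<sigma> u v \<longleftrightarrow> (\<exists>i j. i < j \<and> j < length \<sigma> \<and> \<sigma> ! i = u \<and> \<sigma> ! j = v)"

definition NL :: "('a \<Rightarrow> 'a \<Rightarrow> bool) \<Rightarrow> 'a list \<Rightarrow> 'a \<Rightarrow> 'a set" where
  "NL E \<sigma> v = {u. E v u \<and> before \<sigma> u v}"

definition NR :: "('a \<Rightarrow> 'a \<Rightarrow> bool) \<Rightarrow> 'a list \<Rightarrow> 'a \<Rightarrow> 'a set" where
  "NR E \<sigma> v = {u. E v u \<and> before \<sigma> v u}"

definition imb_vertex :: "('a \<Rightarrow> 'a \<Rightarrow> bool) \<Rightarrow> 'a list \<Rightarrow> 'a \<Rightarrow> nat" where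
  "imb_vertex E \<sigma> v = nat \<bar>int (card (NL E \<sigma> v)) - int (card (NR E \<sigma> v))\<bar>"

definition imbalance :: "'a set \<Rightarrow> ('a \<Rightarrow> 'a \<Rightarrow> bool) \<Rightarrow> 'a list \<Rightarrow> nat" where
  "imbalance V E \<sigma> = (\<Sum>v\<in>V. imb_vertex E \<sigma> v)"

definition edge_minus :: "'a set \<Rightarrow> ('a \<Rightarrow> 'a \<Rightarrow> bool) \<Rightarrow> 'a set \<Rightarrow> 'a \<Rightarrow> 'a \<Rightarrow> bool" where
  "edge_minus V E S u v \<longleftrightarrow> u \<in> V - S \<and> v \<in> V - S \<and> E u v"

definition cliques :: "'a set \<Rightarrow> ('a \<Rightarrow> 'a \<Rightarrow> bool) \<Rightarrow> 'a set \<Rightarrow> 'a set set" where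
  "cliques V E S = (\<lambda>v. {u. (edge_minus V E S)\<^sup>*\<^sup>* v u}) ` (V - S)"

definition closed_nbhd :: "('a \<Rightarrow> 'a \<Rightarrow> bool) \<Rightarrow> 'a \<Rightarrow> 'a set" where
  "closed_nbhd E v = insert v {u. E v u}"

definition twin_cover :: "'a set \<Rightarrow> ('a \<Rightarrow> 'a \<Rightarrow> bool) \<Rightarrow> 'a set \<Rightarrow> bool" where
  "twin_cover V E S \<longleftrightarrow> S \<subseteq> V \<and>
     (\<forall>X \<in> cliques V E S. \<forall>u\<in>X. \<forall>v\<in>X. closed_nbhd E u = closed_nbhd E v)"

definition clique_type :: "('a \<Rightarrow> 'a \<Rightarrow> bool) \<Rightarrow> 'a set \<Rightarrow> 'a set \<Rightarrow> 'a set" where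
  "clique_type E S C = {s \<in> S. E (SOME v. v \<in> C) s}"

text \<open>Classes: Small T j is (T,0,j); Large T b is (T,1,o) if b, (T,1,e) otherwise.\<close>
datatype 'a cls = Small "'a set" nat | Large "'a set" bool

definition classes :: "'a set \<Rightarrow> nat \<Rightarrow> 'a cls set" where
  "classes S k = {Small T j | T j. T \<subseteq> S \<and> j \<in> {1..k}} \<union> {Large T b | T b. T \<subseteq> S}"

definition clique_class :: "('a \<Rightarrow> 'a \<Rightarrow> bool) \<Rightarrow> 'a set \<Rightarrow> nat \<Rightarrow> 'a set \<Rightarrow> 'a cls" where
  "clique_class E S k C =
     (if card C > k then Large (clique_type E S C) (odd (card C))
      else Small (clique_type E S C) (card C))"

definition clean :: "'a set \<Rightarrow> ('a \<Rightarrow> 'a \<Rightarrow> bool) \<Rightarrow> 'a set \<Rightarrow> 'a list \<Rightarrow> bool" where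
  "clean V E S \<sigma> \<longleftrightarrow> layout V \<sigma> \<and>
     (\<forall>C \<in> cliques V E S. \<forall>u\<in>C. \<forall>w\<in>C. \<forall>x. before \<sigma> u x \<and> before \<sigma> x w \<longrightarrow> x \<in> C)"

definition location :: "'a set \<Rightarrow> 'a list \<Rightarrow> 'a set \<Rightarrow> nat" where
  "location S \<sigma> C = card {s \<in> S. before \<sigma> s (SOME v. v \<in> C)} + 1"

definition spec_fun :: "'a set \<Rightarrow> 'a set \<Rightarrow> nat \<Rightarrow> ('a cls \<Rightarrow> nat \<Rightarrow> nat) \<Rightarrow> bool" where
  "spec_fun V S k \<alpha> \<longleftrightarrow> (\<forall>\<nu>\<in>classes S k. \<forall>j\<in>{1..k+1}. \<alpha> \<nu> j \<le> card V)"

definition cliques_at :: "'a set \<Rightarrow> ('a \<Rightarrow> 'a \<Rightarrow> bool) \<Rightarrow> 'a set \<Rightarrow> nat \<Rightarrow> 'a list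
     \<Rightarrow> 'a cls \<Rightarrow> nat \<Rightarrow> 'a set set" where
  "cliques_at V E S k \<sigma> \<nu> j =
     {C \<in> cliques V E S. clique_class E S k C = \<nu> \<and> location S \<sigma> C = j}"

definition respects_count where
  "respects_count V E S k \<sigma> \<alpha> \<longleftrightarrow>
     (\<forall>j\<in>{1..k+1}. \<forall>\<nu>\<in>classes S k. card (cliques_at V E S k \<sigma> \<nu> j) = \<alpha> \<nu> j)"

definition respects_size where
  "respects_size V E S k \<sigma> \<beta> \<longleftrightarrow>
     (\<forall>j\<in>{1..k+1}. \<forall>\<nu>\<in>classes S k. (\<Sum>C\<in>cliques_at V E S k \<sigma> \<nu> j. card C) = \<beta> \<nu> j)"

definition similar :: "'a set \<Rightarrow> 'a list \<Rightarrow> 'a list \<Rightarrow> bool" where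
  "similar S \<sigma> \<pi> \<longleftrightarrow> filter (\<lambda>x. x \<in> S) \<sigma> = filter (\<lambda>x. x \<in> S) \<pi>"

end

theory Submission
  imports Defs
begin

lemma before_split: "before xs u v \<longleftrightarrow> (\<exists>ys zs. xs = ys @ zs \<and> u \<in> set ys \<and> v \<in> set zs)"
proof
  assume "before xs u v"
  then obtain i j where ij: "i < j" "j < length xs" "xs ! i = u" "xs ! j = v" unfolding before_def by blast
  have "take j xs ! i = u" "i < length (take j xs)" using ij by auto
  then have "u \<in> set (take j xs)" by (metis nth_mem)
  moreover have "drop j xs ! 0 = v" "0 < length (drop j xs)" using ij by auto
  then have "v \<in> set (drop j xs)" by (metis nth_mem)
  moreover have "xs = take j xs @ drop j xs" by simp
  ultimately show "\<exists>ys zs. xs = ys @ zs \<and> u \<in> set ys \<and> v \<in> set zs" by blast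
next
  assume "\<exists>ys zs. xs = ys @ zs \<and> u \<in> set ys \<and> v \<in> set zs"
  then obtain ys zs where h: "xs = ys @ zs" "u \<in> set ys" "v \<in> set zs" by blast
  then obtain i j where "i < length ys" "ys ! i = u" "j < length zs" "zs ! j = v" by (metis in_set_conv_nth)
  then show "before xs u v" unfolding before_def using h
    by (intro exI[of _ i] exI[of _ "length ys + j"]) (auto simp: nth_append)
qed

lemma before_set: "before xs u v \<Longrightarrow> u \<in> set xs \<and> v \<in> set xs"
  unfolding before_def by auto

lemma before_irrefl: "distinct xs \<Longrightarrow> \<not> before xs u u"
proof
  assume d: "distinct xs" and "before xs u u"
  then obtain i j where ij: "i < j" "j < length xs" "xs ! i = u" "xs ! j = u" unfolding before_def by blast
  then have "i = j" using d nth_eq_iff_index_eq[of xs i j] by simp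
  then show False using ij by simp
qed

lemma before_trans: "distinct xs \<Longrightarrow> before xs u v \<Longrightarrow> before xs v w \<Longrightarrow> before xs u w"
proof -
  assume d: "distinct xs" and "before xs u v" "before xs v w"
  then obtain i j j' l where ij: "i < j" "j < length xs" "xs ! i = u" "xs ! j = v"
    and jl: "j' < l" "l < length xs" "xs ! j' = v" "xs ! l = w" unfolding before_def by blast
  have "j = j'" using d nth_eq_iff_index_eq[of xs j j'] ij jl by simp
  then show "before xs u w" unfolding before_def using ij jl by (intro exI[of _ i] exI[of _ l]) simp
qed

lemma before_asym: "distinct xs \<Longrightarrow> before xs u v \<Longrightarrow> \<not> before xs v u"
proof
  assume "distinct xs" "before xs u v" "before xs v u"
  then have "before xs u u" by (rule before_trans)
  then show False using before_irrefl[OF \<open>distinct xs\<close>, of u] by simp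
qed

lemma before_total: "u \<in> set xs \<Longrightarrow> v \<in> set xs \<Longrightarrow> u \<noteq> v \<Longrightarrow> before xs u v \<or> before xs v u"
proof -
  assume "u \<in> set xs" "v \<in> set xs" "u \<noteq> v"
  then obtain i j where ij: "i < length xs" "xs ! i = u" "j < length xs" "xs ! j = v" "i \<noteq> j"
    by (metis in_set_conv_nth)
  show ?thesis
  proof (cases "i < j")
    case True then show ?thesis unfolding before_def using ij by blast
  next
    case False then have "j < i" using ij by simp
    then show ?thesis unfolding before_def using ij by blast
  qed
qed

lemma before_filter: "before xs u v \<Longrightarrow> P u \<Longrightarrow> P v \<Longrightarrow> before (filter P xs) u v"
proof -
  assume "before xs u v" "P u" "P v"
  then obtain ys zs where h: "xs = ys @ zs" "u \<in> set ys" "v \<in> set zs" unfolding before_split by blast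
  have "filter P xs = filter P ys @ filter P zs" using h by simp
  moreover have "u \<in> set (filter P ys)" "v \<in> set (filter P zs)" using h \<open>P u\<close> \<open>P v\<close> by auto
  ultimately show ?thesis unfolding before_split by blast
qed

lemma before_filter_iff: "distinct xs \<Longrightarrow> P u \<Longrightarrow> P v \<Longrightarrow> before (filter P xs) u v \<longleftrightarrow> before xs u v"
proof
  assume d: "distinct xs" and p: "P u" "P v" and b: "before (filter P xs) u v"
  have df: "distinct (filter P xs)" using d by simp
  have uv: "u \<noteq> v" using b before_irrefl[OF df, of u] by auto
  have "u \<in> set (filter P xs)" "v \<in> set (filter P xs)" using before_set[OF b] by auto
  then have "u \<in> set xs" "v \<in> set xs" by auto
  then have "before xs u v \<or> before xs v u" using uv before_total[of u xs v] by simp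
  moreover have "\<not> before xs v u"
  proof
    assume "before xs v u"
    then have "before (filter P xs) v u" using before_filter[of xs v u P] p by simp
    then show False using before_asym[OF df b] by simp
  qed
  ultimately show "before xs u v" by blast
qed (rule before_filter)

lemma before_Cons: "before L b a \<Longrightarrow> before (x # L) b a"
  unfolding before_split by (metis append_Cons list.set_intros(2))

lemma downclosed_take:
  "distinct L \<Longrightarrow> A \<subseteq> set L \<Longrightarrow> (\<forall>a\<in>A. \<forall>b. before L b a \<longrightarrow> b \<in> A) \<Longrightarrow> A = set (take (card A) L)"
proof (induction L arbitrary: A)
  case Nil then show ?case by simp
next
  case (Cons x L)
  have dist: "distinct L" "x \<notin> set L" using Cons.prems(1) by auto
  have AS: "A \<subseteq> insert x (set L)" using Cons.prems(2) by simp
  have DC: "\<And>a b. a \<in> A \<Longrightarrow> before (x # L) b a \<Longrightarrow> b \<in> A" using Cons.prems(3) by blast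
  show ?case
  proof (cases "x \<in> A")
    case True
    define A' where "A' = A - {x}"
    have sub: "A' \<subseteq> set L" using AS unfolding A'_def by blast
    have dc: "\<forall>a\<in>A'. \<forall>b. before L b a \<longrightarrow> b \<in> A'"
    proof (intro ballI allI impI)
      fix a b assume a: "a \<in> A'" and b: "before L b a"
      have "b \<in> A" using DC[OF _ before_Cons[OF b]] a unfolding A'_def by blast
      moreover have "b \<in> set L" using before_set[OF b] by blast
      ultimately show "b \<in> A'" using dist(2) unfolding A'_def by blast
    qed
    have h: "A' = set (take (card A') L)" using Cons.IH[OF dist(1) sub dc] .
    have "finite A" using Cons.prems(2) finite_subset by blast
    then have c: "card A = Suc (card A')" using True unfolding A'_def by (rule card.remove)
    have e1: "set (take (card A) (x # L)) = insert x (set (take (card A') L))"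
      unfolding c by (simp only: take_Suc_Cons list.set(2))
    have e2: "A = insert x A'" using True unfolding A'_def by blast
    show ?thesis unfolding e1 by (subst e2, subst (1) h, rule refl)
  next
    case False
    have "A = {}"
    proof (rule ccontr)
      assume "A \<noteq> {}"
      then obtain a where a: "a \<in> A" by blast
      then have "a \<in> set L" using False AS by blast
      then have "before (x # L) x a" unfolding before_split by (intro exI[of _ "[x]"] exI[of _ L]) simp
      then have "x \<in> A" using DC a by blast
      then show False using False by simp
    qed
    then show ?thesis by simp
  qed
qed

definition Pset :: "'a list \<Rightarrow> nat \<Rightarrow> 'a set" where
  "Pset L j = set (take (j - 1) L)"

definition rep :: "'a set \<Rightarrow> 'a" where "rep C = (SOME v. v \<in> C)"

locale tc =
  fixes V :: "'a set" and E :: "'a \<Rightarrow> 'a \<Rightarrow> bool" and S :: "'a set"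
  assumes G: "graph V E" and TC: "twin_cover V E S"
begin

abbreviation R where "R \<equiv> edge_minus V E S"

lemma finV: "finite V" using G unfolding graph_def by simp
lemma SV: "S \<subseteq> V" using TC unfolding twin_cover_def by simp
lemma finS: "finite S" using finV SV finite_subset by blast
lemma E_V: "E u v \<Longrightarrow> u \<in> V \<and> v \<in> V" using G unfolding graph_def by simp
lemma E_sym: "E u v \<Longrightarrow> E v u" using G unfolding graph_def by simp
lemma E_irr: "\<not> E u u" using G unfolding graph_def by simp

lemma R_sym: "R u v \<Longrightarrow> R v u" unfolding edge_minus_def using E_sym by simp

lemma rt_sym: "R\<^sup>*\<^sup>* u v \<Longrightarrow> R\<^sup>*\<^sup>* v u"
proof (induction rule: rtranclp_induct)
  case base then show ?case by simp
next
  case (step y z)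
  have "R z y" using R_sym[OF step(2)] .
  then show ?case using converse_rtranclp_into_rtranclp[OF _ step(3)] by simp
qed

lemma rt_in: "R\<^sup>*\<^sup>* v u \<Longrightarrow> v \<in> V - S \<Longrightarrow> u \<in> V - S"
proof (induction rule: rtranclp_induct)
  case base then show ?case by simp
next
  case (step y z) then show ?case unfolding edge_minus_def by simp
qed

lemma clique_cases: "C \<in> cliques V E S \<Longrightarrow> \<exists>v\<in>V - S. C = {u. R\<^sup>*\<^sup>* v u}"
  unfolding cliques_def by auto

lemma clique_sub: "C \<in> cliques V E S \<Longrightarrow> C \<subseteq> V - S"
  using clique_cases rt_in by blast

lemma clique_ne: "C \<in> cliques V E S \<Longrightarrow> C \<noteq> {}"
  using clique_cases by fastforce

lemma clique_fin: "C \<in> cliques V E S \<Longrightarrow> finite C"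
  using clique_sub finV finite_subset by (metis Diff_subset order_trans)

lemma clique_eq: "C \<in> cliques V E S \<Longrightarrow> D \<in> cliques V E S \<Longrightarrow> x \<in> C \<Longrightarrow> x \<in> D \<Longrightarrow> C = D"
proof -
  assume "C \<in> cliques V E S" "D \<in> cliques V E S" "x \<in> C" "x \<in> D"
  then obtain v w where vw: "C = {u. R\<^sup>*\<^sup>* v u}" "D = {u. R\<^sup>*\<^sup>* w u}" using clique_cases by meson
  have vx: "R\<^sup>*\<^sup>* v x" "R\<^sup>*\<^sup>* w x" using vw \<open>x \<in> C\<close> \<open>x \<in> D\<close> by auto
  have "R\<^sup>*\<^sup>* v u \<longleftrightarrow> R\<^sup>*\<^sup>* w u" for u
  proof
    assume "R\<^sup>*\<^sup>* v u"
    then have "R\<^sup>*\<^sup>* x u" using rtranclp_trans[OF rt_sym[OF vx(1)]] by simp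
    then show "R\<^sup>*\<^sup>* w u" using rtranclp_trans[OF vx(2)] by simp
  next
    assume "R\<^sup>*\<^sup>* w u"
    then have "R\<^sup>*\<^sup>* x u" using rtranclp_trans[OF rt_sym[OF vx(2)]] by simp
    then show "R\<^sup>*\<^sup>* v u" using rtranclp_trans[OF vx(1)] by simp
  qed
  then show "C = D" using vw by simp
qed

lemma clique_union: "\<Union> (cliques V E S) = V - S"
proof
  show "\<Union> (cliques V E S) \<subseteq> V - S" using clique_sub by blast
next
  show "V - S \<subseteq> \<Union> (cliques V E S)"
  proof
    fix v assume "v \<in> V - S"
    then have "{u. R\<^sup>*\<^sup>* v u} \<in> cliques V E S" unfolding cliques_def by blast
    moreover have "v \<in> {u. R\<^sup>*\<^sup>* v u}" by simp
    ultimately show "v \<in> \<Union> (cliques V E S)" by blast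
  qed
qed

lemma fin_cliques: "finite (cliques V E S)"
  unfolding cliques_def using finV by simp

lemma clique_adj: "C \<in> cliques V E S \<Longrightarrow> u \<in> C \<Longrightarrow> v \<in> C \<Longrightarrow> u \<noteq> v \<Longrightarrow> E u v"
proof -
  assume a: "C \<in> cliques V E S" "u \<in> C" "v \<in> C" "u \<noteq> v"
  then have "closed_nbhd E u = closed_nbhd E v" using TC unfolding twin_cover_def by blast
  moreover have "v \<in> closed_nbhd E v" unfolding closed_nbhd_def by simp
  ultimately have "v \<in> insert u {x. E u x}" unfolding closed_nbhd_def by simp
  then show "E u v" using a(4) by simp
qed

lemma clique_closed: "C \<in> cliques V E S \<Longrightarrow> v \<in> C \<Longrightarrow> u \<in> V - S \<Longrightarrow> E v u \<Longrightarrow> u \<in> C"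
proof -
  assume a: "C \<in> cliques V E S" "v \<in> C" "u \<in> V - S" "E v u"
  then obtain w where w: "C = {x. R\<^sup>*\<^sup>* w x}" using clique_cases by meson
  have "v \<in> V - S" using a clique_sub by blast
  then have "R v u" using a unfolding edge_minus_def by simp
  then have "R\<^sup>*\<^sup>* w u" using a(2) w rtranclp.rtrancl_into_rtrancl[of R w v u] by simp
  then show "u \<in> C" using w by simp
qed

lemma clique_S: "C \<in> cliques V E S \<Longrightarrow> v \<in> C \<Longrightarrow> w \<in> C \<Longrightarrow> s \<in> S \<Longrightarrow> E v s \<Longrightarrow> E w s"
proof -
  assume a: "C \<in> cliques V E S" "v \<in> C" "w \<in> C" "s \<in> S" "E v s"
  then have "closed_nbhd E v = closed_nbhd E w" using TC unfolding twin_cover_def by blast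
  moreover have "s \<in> closed_nbhd E v" using a(5) unfolding closed_nbhd_def by simp
  ultimately have "s \<in> insert w {x. E w x}" unfolding closed_nbhd_def by simp
  moreover have "s \<noteq> w" using a clique_sub by blast
  ultimately show "E w s" by simp
qed

lemma rep_in: "C \<in> cliques V E S \<Longrightarrow> rep C \<in> C"
  unfolding rep_def using clique_ne some_in_eq by blast

lemma type_iff: "C \<in> cliques V E S \<Longrightarrow> v \<in> C \<Longrightarrow> s \<in> S \<Longrightarrow> s \<in> clique_type E S C \<longleftrightarrow> E v s"
proof -
  assume a: "C \<in> cliques V E S" "v \<in> C" "s \<in> S"
  have "clique_type E S C = {s \<in> S. E (rep C) s}" unfolding clique_type_def rep_def by simp
  then show ?thesis using a clique_S[OF a(1) a(2) rep_in[OF a(1)] a(3)] clique_S[OF a(1) rep_in[OF a(1)] a(2) a(3)]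
    by auto
qed

lemma type_sub: "clique_type E S C \<subseteq> S" unfolding clique_type_def by auto

end

lemma rank_lt: "distinct xs \<Longrightarrow> finite C \<Longrightarrow> u \<in> C \<Longrightarrow> before xs u v \<Longrightarrow>
  card {x\<in>C. before xs x u} < card {x\<in>C. before xs x v}"
proof -
  assume d: "distinct xs" and f: "finite C" and u: "u \<in> C" and b: "before xs u v"
  have "{x\<in>C. before xs x u} \<subseteq> {x\<in>C. before xs x v}" using before_trans[OF d _ b] by blast
  moreover have "u \<in> {x\<in>C. before xs x v}" using u b by simp
  moreover have "u \<notin> {x\<in>C. before xs x u}" using before_irrefl[OF d, of u] by simp
  ultimately have "{x\<in>C. before xs x u} \<subset> {x\<in>C. before xs x v}" by blast
  then show ?thesis using f by (simp add: psubset_card_mono)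
qed

lemma rank_bij: "distinct xs \<Longrightarrow> finite C \<Longrightarrow> C \<subseteq> set xs \<Longrightarrow>
  bij_betw (\<lambda>v. card {u\<in>C. before xs u v}) C {..<card C}"
proof -
  assume d: "distinct xs" and f: "finite C" and C: "C \<subseteq> set xs"
  define r where "r = (\<lambda>v. card {u\<in>C. before xs u v})"
  have inj: "inj_on r C"
  proof (rule inj_onI)
    fix u v assume uv: "u \<in> C" "v \<in> C" "r u = r v"
    show "u = v"
    proof (rule ccontr)
      assume "u \<noteq> v"
      then have "before xs u v \<or> before xs v u" using before_total[of u xs v] uv C by auto
      then show False
      proof
        assume "before xs u v" then have "r u < r v" unfolding r_def using rank_lt[OF d f uv(1)] by simp
        then show False using uv by simp
      next
        assume "before xs v u" then have "r v < r u" unfolding r_def using rank_lt[OF d f uv(2)] by simp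
        then show False using uv by simp
      qed
    qed
  qed
  have img: "r ` C \<subseteq> {..<card C}"
  proof
    fix y assume "y \<in> r ` C"
    then obtain v where v: "v \<in> C" "y = r v" by blast
    have "{u\<in>C. before xs u v} \<subseteq> C - {v}" using before_irrefl[OF d, of v] by auto
    then have "card {u\<in>C. before xs u v} \<le> card (C - {v})" using f by (simp add: card_mono)
    also have "\<dots> < card C" by (rule card_Diff1_less[OF f v(1)])
    finally show "y \<in> {..<card C}" using v unfolding r_def by simp
  qed
  have "card (r ` C) = card {..<card C}" using card_image[OF inj] by simp
  then have "r ` C = {..<card C}" using card_subset_eq[OF _ img] by simp
  then show ?thesis using inj unfolding bij_betw_def r_def by simp
qed

lemma rank_after: "distinct xs \<Longrightarrow> finite C \<Longrightarrow> C \<subseteq> set xs \<Longrightarrow> v \<in> C \<Longrightarrow>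
  card {u\<in>C. before xs u v} + card {u\<in>C. before xs v u} + 1 = card C"
proof -
  assume d: "distinct xs" and f: "finite C" and C: "C \<subseteq> set xs" and v: "v \<in> C"
  have "C = insert v ({u\<in>C. before xs u v} \<union> {u\<in>C. before xs v u})"
  proof -
    have "u \<in> C \<Longrightarrow> u \<noteq> v \<Longrightarrow> before xs u v \<or> before xs v u" for u
      using before_total[of u xs v] C v by auto
    then show ?thesis using v by auto
  qed
  moreover have "v \<notin> {u\<in>C. before xs u v} \<union> {u\<in>C. before xs v u}" using before_irrefl[OF d, of v] by simp
  moreover have "{u\<in>C. before xs u v} \<inter> {u\<in>C. before xs v u} = {}" using before_asym[OF d] by blast
  ultimately have "card C = Suc (card ({u\<in>C. before xs u v} \<union> {u\<in>C. before xs v u}))"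
    using f by (metis card_insert_disjoint finite_Un finite_insert)
  also have "\<dots> = Suc (card {u\<in>C. before xs u v} + card {u\<in>C. before xs v u})"
    using f \<open>{u\<in>C. before xs u v} \<inter> {u\<in>C. before xs v u} = {}\<close> by (simp add: card_Un_disjoint)
  finally show ?thesis by simp
qed

context tc
begin

lemma clean_dist: "clean V E S \<sigma> \<Longrightarrow> distinct \<sigma>" unfolding clean_def layout_def by simp
lemma clean_set: "clean V E S \<sigma> \<Longrightarrow> set \<sigma> = V" unfolding clean_def layout_def by simp

lemma clean_btw: "clean V E S \<sigma> \<Longrightarrow> C \<in> cliques V E S \<Longrightarrow> v \<in> C \<Longrightarrow> w \<in> C \<Longrightarrow> x \<notin> C \<Longrightarrow>
   before \<sigma> x v \<Longrightarrow> before \<sigma> x w"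
proof -
  assume cl: "clean V E S \<sigma>" and C: "C \<in> cliques V E S" and vw: "v \<in> C" "w \<in> C" and x: "x \<notin> C"
    and b: "before \<sigma> x v"
  have xs: "x \<in> set \<sigma>" using before_set[OF b] by simp
  have ws: "w \<in> set \<sigma>" using clean_set[OF cl] clique_sub[OF C] vw by blast
  have "x \<noteq> w" using x vw by blast
  then have "before \<sigma> x w \<or> before \<sigma> w x" using before_total[OF xs ws] by simp
  moreover have "\<not> before \<sigma> w x"
  proof
    assume "before \<sigma> w x"
    then have "x \<in> C" using cl C vw b unfolding clean_def by blast
    then show False using x by simp
  qed
  ultimately show ?thesis by simp
qed

lemma clean_btw2: "clean V E S \<sigma> \<Longrightarrow> C \<in> cliques V E S \<Longrightarrow> v \<in> C \<Longrightarrow> w \<in> C \<Longrightarrow> x \<notin> C \<Longrightarrow>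
   before \<sigma> v x \<Longrightarrow> before \<sigma> w x"
proof -
  assume cl: "clean V E S \<sigma>" and C: "C \<in> cliques V E S" and vw: "v \<in> C" "w \<in> C" and x: "x \<notin> C"
    and b: "before \<sigma> v x"
  have xs: "x \<in> set \<sigma>" using before_set[OF b] by simp
  have ws: "w \<in> set \<sigma>" using clean_set[OF cl] clique_sub[OF C] vw by blast
  have "x \<noteq> w" using x vw by blast
  then have "before \<sigma> x w \<or> before \<sigma> w x" using before_total[OF xs ws] by simp
  moreover have "\<not> before \<sigma> x w"
  proof
    assume "before \<sigma> x w"
    then have "x \<in> C" using cl C vw b unfolding clean_def by blast
    then show False using x by simp
  qed
  ultimately show ?thesis by simp
qed

abbreviation Lf where "Lf \<sigma> \<equiv> filter (\<lambda>x. x \<in> S) \<sigma>"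

lemma loc_set: "clean V E S \<sigma> \<Longrightarrow>
  {s\<in>S. before \<sigma> s w} = Pset (Lf \<sigma>) (card {s\<in>S. before \<sigma> s w} + 1)"
proof -
  assume cl: "clean V E S \<sigma>"
  define A where "A = {s\<in>S. before \<sigma> s w}"
  have d: "distinct \<sigma>" using clean_dist[OF cl] .
  have dL: "distinct (Lf \<sigma>)" using d by simp
  have sub: "A \<subseteq> set (Lf \<sigma>)" unfolding A_def using before_set by fastforce
  have dc: "\<forall>a\<in>A. \<forall>b. before (Lf \<sigma>) b a \<longrightarrow> b \<in> A"
  proof (intro ballI allI impI)
    fix a b assume a: "a \<in> A" and b: "before (Lf \<sigma>) b a"
    have bS: "b \<in> S" using before_set[OF b] by simp
    have aS: "a \<in> S" using a unfolding A_def by simp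
    have "before \<sigma> b a" using b before_filter_iff[OF d, of "\<lambda>x. x \<in> S" b a] aS bS by simp
    then have "before \<sigma> b w" using before_trans[OF d] a unfolding A_def by blast
    then show "b \<in> A" unfolding A_def using bS by simp
  qed
  have "A = set (take (card A) (Lf \<sigma>))" using downclosed_take[OF dL sub dc] .
  then show ?thesis unfolding A_def Pset_def by simp
qed

definition P where "P \<sigma> C = Pset (Lf \<sigma>) (location S \<sigma> C)"

lemma loc_iff: "clean V E S \<sigma> \<Longrightarrow> C \<in> cliques V E S \<Longrightarrow> v \<in> C \<Longrightarrow> s \<in> S \<Longrightarrow>
   before \<sigma> s v \<longleftrightarrow> s \<in> P \<sigma> C"
proof -
  assume cl: "clean V E S \<sigma>" and C: "C \<in> cliques V E S" and v: "v \<in> C" and s: "s \<in> S"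
  have sC: "s \<notin> C" using clique_sub[OF C] s by blast
  have r: "rep C \<in> C" using rep_in[OF C] .
  have "P \<sigma> C = {s\<in>S. before \<sigma> s (rep C)}"
    unfolding P_def location_def rep_def[symmetric] using loc_set[OF cl, of "rep C"] by simp
  moreover have "before \<sigma> s v \<longleftrightarrow> before \<sigma> s (rep C)"
    using clean_btw[OF cl C v r sC] clean_btw[OF cl C r v sC] by blast
  ultimately show ?thesis using s by simp
qed

lemma loc_iff2: "clean V E S \<sigma> \<Longrightarrow> C \<in> cliques V E S \<Longrightarrow> v \<in> C \<Longrightarrow> s \<in> S \<Longrightarrow>
   before \<sigma> v s \<longleftrightarrow> s \<notin> P \<sigma> C"
proof -
  assume cl: "clean V E S \<sigma>" and C: "C \<in> cliques V E S" and v: "v \<in> C" and s: "s \<in> S"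
  have d: "distinct \<sigma>" using clean_dist[OF cl] .
  have "s \<noteq> v" using clique_sub[OF C] s v by blast
  moreover have "s \<in> set \<sigma>" "v \<in> set \<sigma>" using clean_set[OF cl] SV s clique_sub[OF C] v by blast+
  ultimately have "before \<sigma> s v \<or> before \<sigma> v s" using before_total by metis
  moreover have "\<not> (before \<sigma> s v \<and> before \<sigma> v s)" using before_asym[OF d] by blast
  ultimately show ?thesis using loc_iff[OF cl C v s] by blast
qed

end

definition fs :: "nat \<Rightarrow> int \<Rightarrow> int" where
  "fs c d = (\<Sum>p<c. \<bar>2 * int p - int c + 1 + d\<bar>)"

definition Dv :: "'a list \<Rightarrow> 'a set \<Rightarrow> nat \<Rightarrow> int" where
  "Dv L T j = int (card (T \<inter> Pset L j)) - int (card (T - Pset L j))"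

context tc
begin

lemma NL_clique: "clean V E S \<sigma> \<Longrightarrow> C \<in> cliques V E S \<Longrightarrow> v \<in> C \<Longrightarrow>
  NL E \<sigma> v = {u\<in>C. before \<sigma> u v} \<union> (clique_type E S C \<inter> P \<sigma> C)"
proof -
  assume cl: "clean V E S \<sigma>" and C: "C \<in> cliques V E S" and v: "v \<in> C"
  have d: "distinct \<sigma>" using clean_dist[OF cl] .
  show ?thesis
  proof (rule set_eqI)
    fix u
    show "u \<in> NL E \<sigma> v \<longleftrightarrow> u \<in> {u\<in>C. before \<sigma> u v} \<union> (clique_type E S C \<inter> P \<sigma> C)"
    proof
      assume "u \<in> NL E \<sigma> v"
      then have e: "E v u" and b: "before \<sigma> u v" unfolding NL_def by auto
      have uV: "u \<in> V" using E_V[OF e] by simp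
      show "u \<in> {u\<in>C. before \<sigma> u v} \<union> (clique_type E S C \<inter> P \<sigma> C)"
      proof (cases "u \<in> S")
        case True
        then have "u \<in> clique_type E S C" using type_iff[OF C v True] e by simp
        moreover have "u \<in> P \<sigma> C" using loc_iff[OF cl C v True] b by simp
        ultimately show ?thesis by simp
      next
        case False
        then have "u \<in> C" using clique_closed[OF C v _ e] uV by simp
        then show ?thesis using b by simp
      qed
    next
      assume "u \<in> {u\<in>C. before \<sigma> u v} \<union> (clique_type E S C \<inter> P \<sigma> C)"
      then show "u \<in> NL E \<sigma> v"
      proof
        assume "u \<in> {u\<in>C. before \<sigma> u v}"
        then have u: "u \<in> C" "before \<sigma> u v" by auto
        then have "u \<noteq> v" using before_irrefl[OF d, of u] by auto
        then have "E v u" using clique_adj[OF C v u(1)] by simp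
        then show ?thesis using u unfolding NL_def by simp
      next
        assume u: "u \<in> clique_type E S C \<inter> P \<sigma> C"
        then have uS: "u \<in> S" using type_sub by blast
        have "E v u" using u type_iff[OF C v uS] by simp
        moreover have "before \<sigma> u v" using u loc_iff[OF cl C v uS] by simp
        ultimately show ?thesis unfolding NL_def by simp
      qed
    qed
  qed
qed

lemma NR_clique: "clean V E S \<sigma> \<Longrightarrow> C \<in> cliques V E S \<Longrightarrow> v \<in> C \<Longrightarrow>
  NR E \<sigma> v = {u\<in>C. before \<sigma> v u} \<union> (clique_type E S C - P \<sigma> C)"
proof -
  assume cl: "clean V E S \<sigma>" and C: "C \<in> cliques V E S" and v: "v \<in> C"
  have d: "distinct \<sigma>" using clean_dist[OF cl] .
  show ?thesis
  proof (rule set_eqI)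
    fix u
    show "u \<in> NR E \<sigma> v \<longleftrightarrow> u \<in> {u\<in>C. before \<sigma> v u} \<union> (clique_type E S C - P \<sigma> C)"
    proof
      assume "u \<in> NR E \<sigma> v"
      then have e: "E v u" and b: "before \<sigma> v u" unfolding NR_def by auto
      have uV: "u \<in> V" using E_V[OF e] by simp
      show "u \<in> {u\<in>C. before \<sigma> v u} \<union> (clique_type E S C - P \<sigma> C)"
      proof (cases "u \<in> S")
        case True
        then have "u \<in> clique_type E S C" using type_iff[OF C v True] e by simp
        moreover have "u \<notin> P \<sigma> C" using loc_iff2[OF cl C v True] b by simp
        ultimately show ?thesis by simp
      next
        case False
        then have "u \<in> C" using clique_closed[OF C v _ e] uV by simp
        then show ?thesis using b by simp
      qed
    next
      assume "u \<in> {u\<in>C. before \<sigma> v u} \<union> (clique_type E S C - P \<sigma> C)"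
      then show "u \<in> NR E \<sigma> v"
      proof
        assume "u \<in> {u\<in>C. before \<sigma> v u}"
        then have u: "u \<in> C" "before \<sigma> v u" by auto
        then have "u \<noteq> v" using before_irrefl[OF d, of u] by auto
        then have "E v u" using clique_adj[OF C v u(1)] by simp
        then show ?thesis using u unfolding NR_def by simp
      next
        assume u: "u \<in> clique_type E S C - P \<sigma> C"
        then have uS: "u \<in> S" using type_sub by blast
        have "E v u" using u type_iff[OF C v uS] by simp
        moreover have "before \<sigma> v u" using u loc_iff2[OF cl C v uS] by simp
        ultimately show ?thesis unfolding NR_def by simp
      qed
    qed
  qed
qed

lemma imb_clique_sum: "clean V E S \<sigma> \<Longrightarrow> C \<in> cliques V E S \<Longrightarrow>
  (\<Sum>v\<in>C. int (imb_vertex E \<sigma> v)) = fs (card C) (Dv (Lf \<sigma>) (clique_type E S C) (location S \<sigma> C))"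
proof -
  assume cl: "clean V E S \<sigma>" and C: "C \<in> cliques V E S"
  have d: "distinct \<sigma>" using clean_dist[OF cl] .
  have fC: "finite C" using clique_fin[OF C] .
  have Cs: "C \<subseteq> set \<sigma>" using clean_set[OF cl] clique_sub[OF C] by blast
  define T where "T = clique_type E S C"
  have fT: "finite T" using finS type_sub finite_subset unfolding T_def by blast
  define D where "D = Dv (Lf \<sigma>) T (location S \<sigma> C)"
  define r where "r = (\<lambda>v. card {u\<in>C. before \<sigma> u v})"
  define g where "g = (\<lambda>p::nat. \<bar>2 * int p - int (card C) + 1 + D\<bar>)"
  have CS: "C \<inter> S = {}" using clique_sub[OF C] by blast
  have each: "int (imb_vertex E \<sigma> v) = g (r v)" if v: "v \<in> C" for v
  proof -
    have "card (NL E \<sigma> v) = card {u\<in>C. before \<sigma> u v} + card (T \<inter> P \<sigma> C)"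
      unfolding NL_clique[OF cl C v] T_def[symmetric]
      by (rule card_Un_disjoint) (use fC fT CS type_sub[of C] in \<open>auto simp: T_def\<close>)
    moreover have "card (NR E \<sigma> v) = card {u\<in>C. before \<sigma> v u} + card (T - P \<sigma> C)"
      unfolding NR_clique[OF cl C v] T_def[symmetric]
      by (rule card_Un_disjoint) (use fC fT CS type_sub[of C] in \<open>auto simp: T_def\<close>)
    moreover have "card {u\<in>C. before \<sigma> u v} + card {u\<in>C. before \<sigma> v u} + 1 = card C"
      using rank_after[OF d fC Cs v] .
    moreover have "D = int (card (T \<inter> P \<sigma> C)) - int (card (T - P \<sigma> C))"
      unfolding D_def Dv_def P_def by simp
    ultimately show ?thesis unfolding imb_vertex_def g_def r_def by simp
  qed
  have "(\<Sum>v\<in>C. int (imb_vertex E \<sigma> v)) = (\<Sum>v\<in>C. g (r v))" using each by simp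
  also have "\<dots> = (\<Sum>p\<in>{..<card C}. g p)"
    using sum.reindex_bij_betw[OF rank_bij[OF d fC Cs]] unfolding r_def by simp
  also have "\<dots> = fs (card C) D" unfolding fs_def g_def by simp
  finally show ?thesis unfolding D_def T_def .
qed

end

fun ctype :: "'a cls \<Rightarrow> 'a set" where
  "ctype (Small T j) = T" | "ctype (Large T b) = T"

lemma ctype_class: "ctype (clique_class E S k C) = clique_type E S C"
  unfolding clique_class_def by simp

lemma fin_classes: "finite S \<Longrightarrow> finite (classes S k)"
proof -
  assume f: "finite S"
  have "classes S k \<subseteq> (\<lambda>(T,j). Small T j) ` (Pow S \<times> {1..k}) \<union> (\<lambda>(T,b). Large T b) ` (Pow S \<times> UNIV)"
    unfolding classes_def by auto
  moreover have "finite ((\<lambda>(T,j). Small T j) ` (Pow S \<times> {1..k}) \<union> (\<lambda>(T,b). Large T b) ` (Pow S \<times> (UNIV::bool set)))"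
    using f by simp
  ultimately show ?thesis using finite_subset by blast
qed

context tc
begin

lemma card_X: "card (\<Union>C\<in>cliques V E S. if Q C then C else {}) = (\<Sum>C\<in>cliques V E S. if Q C then card C else 0)"
proof -
  have "card (\<Union>C\<in>cliques V E S. if Q C then C else {}) = (\<Sum>C\<in>cliques V E S. card (if Q C then C else {}))"
  proof (rule card_UN_disjoint)
    show "finite (cliques V E S)" by (rule fin_cliques)
    show "\<forall>C\<in>cliques V E S. finite (if Q C then C else {})" using clique_fin by simp
    show "\<forall>C\<in>cliques V E S. \<forall>D\<in>cliques V E S. C \<noteq> D \<longrightarrow>
        (if Q C then C else {}) \<inter> (if Q D then D else {}) = {}"
    proof (intro ballI impI)
      fix C D assume CD: "C \<in> cliques V E S" "D \<in> cliques V E S" "C \<noteq> D"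
      have "C \<inter> D = {}"
      proof (rule ccontr)
        assume "C \<inter> D \<noteq> {}"
        then obtain x where "x \<in> C" "x \<in> D" by blast
        then show False using clique_eq[OF CD(1) CD(2)] CD(3) by simp
      qed
      then show "(if Q C then C else {}) \<inter> (if Q D then D else {}) = {}" by auto
    qed
  qed
  also have "\<dots> = (\<Sum>C\<in>cliques V E S. if Q C then card C else 0)" by (rule sum.cong) auto
  finally show ?thesis .
qed

lemma NL_S: "clean V E S \<sigma> \<Longrightarrow> s \<in> S \<Longrightarrow> card (NL E \<sigma> s) =
   card {u\<in>S. E s u \<and> before (Lf \<sigma>) u s} +
   (\<Sum>C\<in>cliques V E S. if s \<in> clique_type E S C \<and> s \<notin> P \<sigma> C then card C else 0)"
proof -
  assume cl: "clean V E S \<sigma>" and s: "s \<in> S"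
  have d: "distinct \<sigma>" using clean_dist[OF cl] .
  define A where "A = {u\<in>S. E s u \<and> before (Lf \<sigma>) u s}"
  define Q where "Q = (\<lambda>C. s \<in> clique_type E S C \<and> s \<notin> P \<sigma> C)"
  define B where "B = (\<Union>C\<in>cliques V E S. if Q C then C else {})"
  have eq: "NL E \<sigma> s = A \<union> B"
  proof (rule set_eqI)
    fix u
    show "u \<in> NL E \<sigma> s \<longleftrightarrow> u \<in> A \<union> B"
    proof
      assume "u \<in> NL E \<sigma> s"
      then have e: "E s u" and b: "before \<sigma> u s" unfolding NL_def by auto
      have uV: "u \<in> V" using E_V[OF e] by simp
      show "u \<in> A \<union> B"
      proof (cases "u \<in> S")
        case True
        then have "before (Lf \<sigma>) u s" using before_filter_iff[OF d, of "\<lambda>x. x \<in> S" u s] s b by simp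
        then show ?thesis unfolding A_def using True e by simp
      next
        case False
        then obtain C where C: "C \<in> cliques V E S" "u \<in> C" using uV clique_union by blast
        have "s \<in> clique_type E S C" using type_iff[OF C(1) C(2) s] E_sym[OF e] by simp
        moreover have "s \<notin> P \<sigma> C" using loc_iff2[OF cl C(1) C(2) s] b by simp
        ultimately show ?thesis unfolding B_def Q_def using C by auto
      qed
    next
      assume "u \<in> A \<union> B"
      then show "u \<in> NL E \<sigma> s"
      proof
        assume u: "u \<in> A"
        then have "before \<sigma> u s" using before_filter_iff[OF d, of "\<lambda>x. x \<in> S" u s] s unfolding A_def by simp
        then show ?thesis using u unfolding A_def NL_def by simp
      next
        assume "u \<in> B"
        then obtain C where C: "C \<in> cliques V E S" "u \<in> C" "Q C" unfolding B_def by (auto split: if_splits)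
        have "E u s" using type_iff[OF C(1) C(2) s] C(3) unfolding Q_def by simp
        moreover have "before \<sigma> u s" using loc_iff2[OF cl C(1) C(2) s] C(3) unfolding Q_def by simp
        ultimately show ?thesis unfolding NL_def using E_sym by simp
      qed
    qed
  qed
  have "A \<subseteq> S" unfolding A_def by auto
  moreover have "B \<subseteq> V - S" unfolding B_def using clique_sub by auto
  ultimately have "A \<inter> B = {}" by blast
  moreover have "finite A" using finS unfolding A_def by simp
  moreover have "finite B" using finV \<open>B \<subseteq> V - S\<close> finite_subset by blast
  ultimately have "card (NL E \<sigma> s) = card A + card B" unfolding eq by (simp add: card_Un_disjoint)
  then show ?thesis unfolding B_def card_X A_def Q_def .
qed

lemma NR_S: "clean V E S \<sigma> \<Longrightarrow> s \<in> S \<Longrightarrow> card (NR E \<sigma> s) =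
   card {u\<in>S. E s u \<and> before (Lf \<sigma>) s u} +
   (\<Sum>C\<in>cliques V E S. if s \<in> clique_type E S C \<and> s \<in> P \<sigma> C then card C else 0)"
proof -
  assume cl: "clean V E S \<sigma>" and s: "s \<in> S"
  have d: "distinct \<sigma>" using clean_dist[OF cl] .
  define A where "A = {u\<in>S. E s u \<and> before (Lf \<sigma>) s u}"
  define Q where "Q = (\<lambda>C. s \<in> clique_type E S C \<and> s \<in> P \<sigma> C)"
  define B where "B = (\<Union>C\<in>cliques V E S. if Q C then C else {})"
  have eq: "NR E \<sigma> s = A \<union> B"
  proof (rule set_eqI)
    fix u
    show "u \<in> NR E \<sigma> s \<longleftrightarrow> u \<in> A \<union> B"
    proof
      assume "u \<in> NR E \<sigma> s"
      then have e: "E s u" and b: "before \<sigma> s u" unfolding NR_def by auto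
      have uV: "u \<in> V" using E_V[OF e] by simp
      show "u \<in> A \<union> B"
      proof (cases "u \<in> S")
        case True
        then have "before (Lf \<sigma>) s u" using before_filter_iff[OF d, of "\<lambda>x. x \<in> S" s u] s b by simp
        then show ?thesis unfolding A_def using True e by simp
      next
        case False
        then obtain C where C: "C \<in> cliques V E S" "u \<in> C" using uV clique_union by blast
        have "s \<in> clique_type E S C" using type_iff[OF C(1) C(2) s] E_sym[OF e] by simp
        moreover have "s \<in> P \<sigma> C" using loc_iff[OF cl C(1) C(2) s] b by simp
        ultimately show ?thesis unfolding B_def Q_def using C by auto
      qed
    next
      assume "u \<in> A \<union> B"
      then show "u \<in> NR E \<sigma> s"
      proof
        assume u: "u \<in> A"
        then have "before \<sigma> s u" using before_filter_iff[OF d, of "\<lambda>x. x \<in> S" s u] s unfolding A_def by simp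
        then show ?thesis using u unfolding A_def NR_def by simp
      next
        assume "u \<in> B"
        then obtain C where C: "C \<in> cliques V E S" "u \<in> C" "Q C" unfolding B_def by (auto split: if_splits)
        have "E u s" using type_iff[OF C(1) C(2) s] C(3) unfolding Q_def by simp
        moreover have "before \<sigma> s u" using loc_iff[OF cl C(1) C(2) s] C(3) unfolding Q_def by simp
        ultimately show ?thesis unfolding NR_def using E_sym by simp
      qed
    qed
  qed
  have "A \<subseteq> S" unfolding A_def by auto
  moreover have "B \<subseteq> V - S" unfolding B_def using clique_sub by auto
  ultimately have "A \<inter> B = {}" by blast
  moreover have "finite A" using finS unfolding A_def by simp
  moreover have "finite B" using finV \<open>B \<subseteq> V - S\<close> finite_subset by blast
  ultimately have "card (NR E \<sigma> s) = card A + card B" unfolding eq by (simp add: card_Un_disjoint)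
  then show ?thesis unfolding B_def card_X A_def Q_def .
qed

lemma class_in: "C \<in> cliques V E S \<Longrightarrow> clique_class E S (card S) C \<in> classes S (card S)"
proof -
  assume C: "C \<in> cliques V E S"
  have "card C \<ge> 1" using clique_ne[OF C] clique_fin[OF C] by (simp add: Suc_le_eq card_gt_0_iff)
  then show ?thesis unfolding clique_class_def classes_def using type_sub[of C] by auto
qed

lemma loc_in: "location S \<sigma> C \<in> {1..card S + 1}"
proof -
  have "card {s\<in>S. before \<sigma> s (SOME v. v \<in> C)} \<le> card S" using finS by (simp add: card_mono)
  then show ?thesis unfolding location_def by simp
qed

lemma group_gen:
  fixes h :: "'a set \<Rightarrow> 'b::comm_monoid_add"
  shows "(\<Sum>C\<in>cliques V E S. h C) =
    (\<Sum>\<nu>\<in>classes S (card S). \<Sum>j\<in>{1..card S + 1}. \<Sum>C\<in>cliques_at V E S (card S) \<sigma> \<nu> j. h C)"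
proof -
  define K where "K = classes S (card S) \<times> {1..card S + 1}"
  define key where "key = (\<lambda>C. (clique_class E S (card S) C, location S \<sigma> C))"
  have fK: "finite K" unfolding K_def using fin_classes[OF finS] by simp
  have sub: "key ` cliques V E S \<subseteq> K" unfolding K_def key_def using class_in loc_in by auto
  have "(\<Sum>C\<in>cliques V E S. h C) = (\<Sum>y\<in>K. \<Sum>C\<in>{C\<in>cliques V E S. key C = y}. h C)"
    using sum.group[OF fin_cliques fK sub, of h] by simp
  also have "\<dots> = (\<Sum>(\<nu>,j)\<in>K. \<Sum>C\<in>cliques_at V E S (card S) \<sigma> \<nu> j. h C)"
    by (rule sum.cong) (auto simp: cliques_at_def key_def)
  also have "\<dots> = (\<Sum>\<nu>\<in>classes S (card S). \<Sum>j\<in>{1..card S + 1}. \<Sum>C\<in>cliques_at V E S (card S) \<sigma> \<nu> j. h C)"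
    unfolding K_def by (rule sum.cartesian_product[symmetric])
  finally show ?thesis .
qed

lemma group_size:
  fixes \<phi> :: "'a cls \<Rightarrow> nat \<Rightarrow> 'b::comm_semiring_1"
  assumes rs: "respects_size V E S (card S) \<sigma> \<beta>"
  shows "(\<Sum>C\<in>cliques V E S. \<phi> (clique_class E S (card S) C) (location S \<sigma> C) * of_nat (card C)) =
    (\<Sum>\<nu>\<in>classes S (card S). \<Sum>j\<in>{1..card S + 1}. \<phi> \<nu> j * of_nat (\<beta> \<nu> j))"
proof -
  have "(\<Sum>C\<in>cliques V E S. \<phi> (clique_class E S (card S) C) (location S \<sigma> C) * of_nat (card C)) =
    (\<Sum>\<nu>\<in>classes S (card S). \<Sum>j\<in>{1..card S + 1}. \<Sum>C\<in>cliques_at V E S (card S) \<sigma> \<nu> j.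
        \<phi> (clique_class E S (card S) C) (location S \<sigma> C) * of_nat (card C))"
    by (rule group_gen)
  also have "\<dots> = (\<Sum>\<nu>\<in>classes S (card S). \<Sum>j\<in>{1..card S + 1}. \<phi> \<nu> j * of_nat (\<beta> \<nu> j))"
  proof (rule sum.cong[OF refl], rule sum.cong[OF refl])
    fix \<nu> j assume \<nu>: "\<nu> \<in> classes S (card S)" and j: "j \<in> {1..card S + 1}"
    have "(\<Sum>C\<in>cliques_at V E S (card S) \<sigma> \<nu> j. \<phi> (clique_class E S (card S) C) (location S \<sigma> C) * of_nat (card C))
       = (\<Sum>C\<in>cliques_at V E S (card S) \<sigma> \<nu> j. \<phi> \<nu> j * of_nat (card C))"
      by (rule sum.cong) (auto simp: cliques_at_def)
    also have "\<dots> = \<phi> \<nu> j * of_nat (\<Sum>C\<in>cliques_at V E S (card S) \<sigma> \<nu> j. card C)"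
      by (simp add: sum_distrib_left)
    also have "\<dots> = \<phi> \<nu> j * of_nat (\<beta> \<nu> j)" using rs \<nu> j unfolding respects_size_def by simp
    finally show "(\<Sum>C\<in>cliques_at V E S (card S) \<sigma> \<nu> j. \<phi> (clique_class E S (card S) C) (location S \<sigma> C) * of_nat (card C))
       = \<phi> \<nu> j * of_nat (\<beta> \<nu> j)" .
  qed
  finally show ?thesis .
qed

lemma group_count:
  fixes \<phi> :: "'a cls \<Rightarrow> nat \<Rightarrow> 'b::comm_semiring_1"
  assumes rc: "respects_count V E S (card S) \<sigma> \<alpha>"
  shows "(\<Sum>C\<in>cliques V E S. \<phi> (clique_class E S (card S) C) (location S \<sigma> C)) =
    (\<Sum>\<nu>\<in>classes S (card S). \<Sum>j\<in>{1..card S + 1}. \<phi> \<nu> j * of_nat (\<alpha> \<nu> j))"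
proof -
  have "(\<Sum>C\<in>cliques V E S. \<phi> (clique_class E S (card S) C) (location S \<sigma> C)) =
    (\<Sum>\<nu>\<in>classes S (card S). \<Sum>j\<in>{1..card S + 1}. \<Sum>C\<in>cliques_at V E S (card S) \<sigma> \<nu> j.
        \<phi> (clique_class E S (card S) C) (location S \<sigma> C))"
    by (rule group_gen)
  also have "\<dots> = (\<Sum>\<nu>\<in>classes S (card S). \<Sum>j\<in>{1..card S + 1}. \<phi> \<nu> j * of_nat (\<alpha> \<nu> j))"
  proof (rule sum.cong[OF refl], rule sum.cong[OF refl])
    fix \<nu> j assume \<nu>: "\<nu> \<in> classes S (card S)" and j: "j \<in> {1..card S + 1}"
    have "(\<Sum>C\<in>cliques_at V E S (card S) \<sigma> \<nu> j. \<phi> (clique_class E S (card S) C) (location S \<sigma> C))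
       = (\<Sum>C\<in>cliques_at V E S (card S) \<sigma> \<nu> j. \<phi> \<nu> j)"
      by (rule sum.cong) (auto simp: cliques_at_def)
    also have "\<dots> = \<phi> \<nu> j * of_nat (card (cliques_at V E S (card S) \<sigma> \<nu> j))"
      by (simp add: mult.commute)
    also have "\<dots> = \<phi> \<nu> j * of_nat (\<alpha> \<nu> j)" using rc \<nu> j unfolding respects_count_def by simp
    finally show "(\<Sum>C\<in>cliques_at V E S (card S) \<sigma> \<nu> j. \<phi> (clique_class E S (card S) C) (location S \<sigma> C))
       = \<phi> \<nu> j * of_nat (\<alpha> \<nu> j)" .
  qed
  finally show ?thesis .
qed

end

lemma fs_closed: "\<bar>d\<bar> \<le> int c \<Longrightarrow> 2 * fs c d = int c ^ 2 + d ^ 2 - (if odd (int c + d) then 1 else 0)"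
proof (induction c arbitrary: d)
  case 0
  then have "d = 0" by simp
  then show ?case unfolding fs_def by simp
next
  case (Suc c)
  show ?case
  proof (cases "c = 0")
    case True
    then have f1: "fs (Suc c) d = \<bar>d\<bar>" unfolding fs_def by simp
    have "d = -1 \<or> d = 0 \<or> d = 1" using Suc.prems True by auto
    then show ?thesis unfolding f1 using True by auto
  next
    case False
    show ?thesis
    proof (cases "d \<ge> 1")
      case True
      have "fs (Suc c) d = (\<Sum>p<c. \<bar>2 * int p - int (Suc c) + 1 + d\<bar>) + \<bar>2 * int c - int (Suc c) + 1 + d\<bar>"
        unfolding fs_def by simp
      also have "(\<Sum>p<c. \<bar>2 * int p - int (Suc c) + 1 + d\<bar>) = fs c (d - 1)"
        unfolding fs_def by (rule sum.cong) auto
      also have "\<bar>2 * int c - int (Suc c) + 1 + d\<bar> = int c + d" using True by simp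
      finally have e: "fs (Suc c) d = fs c (d - 1) + (int c + d)" .
      have "\<bar>d - 1\<bar> \<le> int c" using Suc.prems True by simp
      then have ih: "2 * fs c (d - 1) = int c ^ 2 + (d - 1) ^ 2 - (if odd (int c + (d - 1)) then 1 else 0)"
        using Suc.IH by blast
      have par: "odd (int c + (d - 1)) \<longleftrightarrow> odd (int (Suc c) + d)" by presburger
      show ?thesis unfolding e using ih par by (simp add: power2_eq_square algebra_simps)
    next
      case False
      have "fs (Suc c) d = \<bar>2 * int 0 - int (Suc c) + 1 + d\<bar> + (\<Sum>p<c. \<bar>2 * int (Suc p) - int (Suc c) + 1 + d\<bar>)"
        unfolding fs_def by (rule sum.lessThan_Suc_shift)
      also have "(\<Sum>p<c. \<bar>2 * int (Suc p) - int (Suc c) + 1 + d\<bar>) = fs c (d + 1)"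
        unfolding fs_def by (rule sum.cong) auto
      also have "\<bar>2 * int 0 - int (Suc c) + 1 + d\<bar> = int c - d" using False by simp
      finally have e: "fs (Suc c) d = (int c - d) + fs c (d + 1)" .
      have "\<bar>d + 1\<bar> \<le> int c" using Suc.prems False \<open>c \<noteq> 0\<close> by simp
      then have ih: "2 * fs c (d + 1) = int c ^ 2 + (d + 1) ^ 2 - (if odd (int c + (d + 1)) then 1 else 0)"
        using Suc.IH by blast
      have par: "odd (int c + (d + 1)) \<longleftrightarrow> odd (int (Suc c) + d)" by presburger
      show ?thesis unfolding e using ih par by (simp add: power2_eq_square algebra_simps)
    qed
  qed
qed

definition Hf :: "'a list \<Rightarrow> 'a cls \<Rightarrow> nat \<Rightarrow> int" where
  "Hf L \<nu> j = (case \<nu> of Small T c \<Rightarrow> 2 * fs c (Dv L T j)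
     | Large T b \<Rightarrow> (Dv L T j) ^ 2 - (if b \<noteq> odd (Dv L T j) then 1 else 0))"

definition Gf :: "nat \<Rightarrow> 'a set \<Rightarrow> int" where
  "Gf k C = (if card C > k then int (card C) ^ 2 else 0)"

context tc
begin

lemma Dv_bound: "finite T \<Longrightarrow> \<bar>Dv L T j\<bar> \<le> int (card T)"
proof -
  assume "finite T"
  then have "card T = card (T \<inter> Pset L j) + card (T - Pset L j)" by (rule card_Int_Diff)
  then show ?thesis unfolding Dv_def by simp
qed

lemma two_fs: "clean V E S \<sigma> \<Longrightarrow> C \<in> cliques V E S \<Longrightarrow>
  2 * fs (card C) (Dv (Lf \<sigma>) (clique_type E S C) (location S \<sigma> C)) =
  Gf (card S) C + Hf (Lf \<sigma>) (clique_class E S (card S) C) (location S \<sigma> C)"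
proof -
  assume cl: "clean V E S \<sigma>" and C: "C \<in> cliques V E S"
  define T where "T = clique_type E S C"
  define D where "D = Dv (Lf \<sigma>) T (location S \<sigma> C)"
  have fT: "finite T" using finS type_sub finite_subset unfolding T_def by blast
  have "card T \<le> card S" using finS type_sub card_mono unfolding T_def by blast
  then have Db: "\<bar>D\<bar> \<le> int (card S)" using Dv_bound[OF fT] unfolding D_def by (meson of_nat_le_iff order_trans)
  show ?thesis
  proof (cases "card C > card S")
    case True
    have cls: "clique_class E S (card S) C = Large T (odd (card C))" unfolding clique_class_def T_def using True by simp
    have "\<bar>D\<bar> \<le> int (card C)" using Db True by simp
    then have "2 * fs (card C) D = int (card C) ^ 2 + D ^ 2 - (if odd (int (card C) + D) then 1 else 0)"
      by (rule fs_closed)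
    moreover have "odd (int (card C) + D) \<longleftrightarrow> (odd (card C) \<noteq> odd D)" by simp
    ultimately show ?thesis unfolding cls Gf_def Hf_def using True unfolding D_def T_def by simp
  next
    case False
    have cls: "clique_class E S (card S) C = Small T (card C)" unfolding clique_class_def T_def using False by simp
    show ?thesis unfolding cls Gf_def Hf_def using False unfolding D_def T_def by simp
  qed
qed

lemma cliquepart: "clean V E S \<sigma> \<Longrightarrow> respects_count V E S (card S) \<sigma> \<alpha> \<Longrightarrow>
  2 * (\<Sum>v\<in>V - S. int (imb_vertex E \<sigma> v)) =
  (\<Sum>C\<in>cliques V E S. Gf (card S) C) +
  (\<Sum>\<nu>\<in>classes S (card S). \<Sum>j\<in>{1..card S + 1}. Hf (Lf \<sigma>) \<nu> j * of_nat (\<alpha> \<nu> j))"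
proof -
  assume cl: "clean V E S \<sigma>" and rc: "respects_count V E S (card S) \<sigma> \<alpha>"
  have disj: "\<forall>A\<in>cliques V E S. \<forall>B\<in>cliques V E S. A \<noteq> B \<longrightarrow> A \<inter> B = {}"
  proof (intro ballI impI)
    fix A B assume AB: "A \<in> cliques V E S" "B \<in> cliques V E S" "A \<noteq> B"
    show "A \<inter> B = {}"
    proof (rule ccontr)
      assume "A \<inter> B \<noteq> {}"
      then obtain x where "x \<in> A" "x \<in> B" by blast
      then show False using clique_eq[OF AB(1) AB(2)] AB(3) by simp
    qed
  qed
  have "(\<Sum>v\<in>V - S. int (imb_vertex E \<sigma> v)) = (\<Sum>C\<in>cliques V E S. \<Sum>v\<in>C. int (imb_vertex E \<sigma> v))"
    unfolding clique_union[symmetric] using sum.Union_disjoint[OF _ disj] clique_fin by simp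
  then have "2 * (\<Sum>v\<in>V - S. int (imb_vertex E \<sigma> v)) =
     (\<Sum>C\<in>cliques V E S. 2 * fs (card C) (Dv (Lf \<sigma>) (clique_type E S C) (location S \<sigma> C)))"
    using imb_clique_sum[OF cl] by (simp add: sum_distrib_left)
  also have "\<dots> = (\<Sum>C\<in>cliques V E S. Gf (card S) C + Hf (Lf \<sigma>) (clique_class E S (card S) C) (location S \<sigma> C))"
    using two_fs[OF cl] by simp
  also have "\<dots> = (\<Sum>C\<in>cliques V E S. Gf (card S) C) +
     (\<Sum>C\<in>cliques V E S. Hf (Lf \<sigma>) (clique_class E S (card S) C) (location S \<sigma> C))"
    by (rule sum.distrib)
  also have "(\<Sum>C\<in>cliques V E S. Hf (Lf \<sigma>) (clique_class E S (card S) C) (location S \<sigma> C)) =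
     (\<Sum>\<nu>\<in>classes S (card S). \<Sum>j\<in>{1..card S + 1}. Hf (Lf \<sigma>) \<nu> j * of_nat (\<alpha> \<nu> j))"
    by (rule group_count[OF rc])
  finally show ?thesis .
qed

definition ImbS :: "'a list \<Rightarrow> ('a cls \<Rightarrow> nat \<Rightarrow> nat) \<Rightarrow> 'a \<Rightarrow> nat" where
  "ImbS L \<beta> s = nat \<bar>int (card {u\<in>S. E s u \<and> before L u s})
     + (\<Sum>\<nu>\<in>classes S (card S). \<Sum>j\<in>{1..card S + 1}. (if s \<in> ctype \<nu> \<and> s \<notin> Pset L j then 1 else 0) * int (\<beta> \<nu> j))
     - int (card {u\<in>S. E s u \<and> before L s u})
     - (\<Sum>\<nu>\<in>classes S (card S). \<Sum>j\<in>{1..card S + 1}. (if s \<in> ctype \<nu> \<and> s \<in> Pset L j then 1 else 0) * int (\<beta> \<nu> j))\<bar>"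

lemma Spart: "clean V E S \<sigma> \<Longrightarrow> respects_size V E S (card S) \<sigma> \<beta> \<Longrightarrow> s \<in> S \<Longrightarrow>
  imb_vertex E \<sigma> s = ImbS (Lf \<sigma>) \<beta> s"
proof -
  assume cl: "clean V E S \<sigma>" and rs: "respects_size V E S (card S) \<sigma> \<beta>" and s: "s \<in> S"
  have L: "int (\<Sum>C\<in>cliques V E S. if s \<in> clique_type E S C \<and> s \<notin> P \<sigma> C then card C else 0) =
    (\<Sum>\<nu>\<in>classes S (card S). \<Sum>j\<in>{1..card S + 1}. (if s \<in> ctype \<nu> \<and> s \<notin> Pset (Lf \<sigma>) j then 1 else 0) * int (\<beta> \<nu> j))"
  proof -
    have "int (\<Sum>C\<in>cliques V E S. if s \<in> clique_type E S C \<and> s \<notin> P \<sigma> C then card C else 0) =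
      (\<Sum>C\<in>cliques V E S. (\<lambda>\<nu> j. if s \<in> ctype \<nu> \<and> s \<notin> Pset (Lf \<sigma>) j then 1 else 0::int)
          (clique_class E S (card S) C) (location S \<sigma> C) * of_nat (card C))"
      unfolding of_nat_sum by (rule sum.cong) (auto simp: ctype_class P_def)
    also have "\<dots> = (\<Sum>\<nu>\<in>classes S (card S). \<Sum>j\<in>{1..card S + 1}.
        (\<lambda>\<nu> j. if s \<in> ctype \<nu> \<and> s \<notin> Pset (Lf \<sigma>) j then 1 else 0::int) \<nu> j * of_nat (\<beta> \<nu> j))"
      by (rule group_size[OF rs])
    finally show ?thesis by simp
  qed
  have R: "int (\<Sum>C\<in>cliques V E S. if s \<in> clique_type E S C \<and> s \<in> P \<sigma> C then card C else 0) =
    (\<Sum>\<nu>\<in>classes S (card S). \<Sum>j\<in>{1..card S + 1}. (if s \<in> ctype \<nu> \<and> s \<in> Pset (Lf \<sigma>) j then 1 else 0) * int (\<beta> \<nu> j))"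
  proof -
    have "int (\<Sum>C\<in>cliques V E S. if s \<in> clique_type E S C \<and> s \<in> P \<sigma> C then card C else 0) =
      (\<Sum>C\<in>cliques V E S. (\<lambda>\<nu> j. if s \<in> ctype \<nu> \<and> s \<in> Pset (Lf \<sigma>) j then 1 else 0::int)
          (clique_class E S (card S) C) (location S \<sigma> C) * of_nat (card C))"
      unfolding of_nat_sum by (rule sum.cong) (auto simp: ctype_class P_def)
    also have "\<dots> = (\<Sum>\<nu>\<in>classes S (card S). \<Sum>j\<in>{1..card S + 1}.
        (\<lambda>\<nu> j. if s \<in> ctype \<nu> \<and> s \<in> Pset (Lf \<sigma>) j then 1 else 0::int) \<nu> j * of_nat (\<beta> \<nu> j))"
      by (rule group_size[OF rs])
    finally show ?thesis by simp
  qed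
  show ?thesis unfolding imb_vertex_def ImbS_def NL_S[OF cl s] NR_S[OF cl s] of_nat_add L R
    by (simp add: algebra_simps)
qed

end

theorem lemma3_aux:
  fixes V :: "'a set" and E :: "'a \<Rightarrow> 'a \<Rightarrow> bool" and S :: "'a set" and k :: nat
    and \<alpha> \<beta> :: "'a cls \<Rightarrow> nat \<Rightarrow> nat" and \<sigma> \<pi> :: "'a list"
  assumes "graph V E"
    and "twin_cover V E S" and "card S = k"
    and "clean V E S \<sigma>" and "clean V E S \<pi>"
    and "similar S \<sigma> \<pi>"
    and "respects_count V E S k \<sigma> \<alpha>" and "respects_size V E S k \<sigma> \<beta>"
    and "respects_count V E S k \<pi> \<alpha>" and "respects_size V E S k \<pi> \<beta>"
  shows "imbalance V E \<sigma> = imbalance V E \<pi>"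
proof -
  interpret tc V E S using assms(1,2) by unfold_locales
  have rc1: "respects_count V E S (card S) \<sigma> \<alpha>" and rs1: "respects_size V E S (card S) \<sigma> \<beta>"
    and rc2: "respects_count V E S (card S) \<pi> \<alpha>" and rs2: "respects_size V E S (card S) \<pi> \<beta>"
    using assms(3,7-10) by simp_all
  have LL: "Lf \<sigma> = Lf \<pi>" using assms(6) unfolding similar_def by simp
  have split: "int (imbalance V E \<tau>) = (\<Sum>s\<in>S. int (imb_vertex E \<tau> s)) + (\<Sum>v\<in>V - S. int (imb_vertex E \<tau> v))"
    for \<tau>
  proof -
    have "imbalance V E \<tau> = (\<Sum>v\<in>V - S. imb_vertex E \<tau> v) + (\<Sum>s\<in>S. imb_vertex E \<tau> s)"
      unfolding imbalance_def by (rule sum.subset_diff[OF SV finV])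
    then show ?thesis by simp
  qed
  have "2 * int (imbalance V E \<sigma>) = 2 * (\<Sum>s\<in>S. int (ImbS (Lf \<sigma>) \<beta> s)) +
     ((\<Sum>C\<in>cliques V E S. Gf (card S) C) +
      (\<Sum>\<nu>\<in>classes S (card S). \<Sum>j\<in>{1..card S + 1}. Hf (Lf \<sigma>) \<nu> j * of_nat (\<alpha> \<nu> j)))"
    unfolding split cliquepart[OF assms(4) rc1, symmetric] using Spart[OF assms(4) rs1] by simp
  moreover have "2 * int (imbalance V E \<pi>) = 2 * (\<Sum>s\<in>S. int (ImbS (Lf \<pi>) \<beta> s)) +
     ((\<Sum>C\<in>cliques V E S. Gf (card S) C) +
      (\<Sum>\<nu>\<in>classes S (card S). \<Sum>j\<in>{1..card S + 1}. Hf (Lf \<pi>) \<nu> j * of_nat (\<alpha> \<nu> j)))"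
    unfolding split cliquepart[OF assms(5) rc2, symmetric] using Spart[OF assms(5) rs2] by simp
  ultimately have "2 * int (imbalance V E \<sigma>) = 2 * int (imbalance V E \<pi>)" unfolding LL by simp
  then show ?thesis by simp
qed

theorem lemma3:
  fixes V :: "'a set" and E :: "'a \<Rightarrow> 'a \<Rightarrow> bool" and S :: "'a set" and k :: nat
    and \<alpha> \<beta> :: "'a cls \<Rightarrow> nat \<Rightarrow> nat" and \<sigma> \<pi> :: "'a list"
  assumes "graph V E"
    and "twin_cover V E S" and "card S = k"
    and "spec_fun V S k \<alpha>" and "spec_fun V S k \<beta>"
    and "clean V E S \<sigma>" and "clean V E S \<pi>"
    and "similar S \<sigma> \<pi>"
    and "respects_count V E S k \<sigma> \<alpha>" and "respects_size V E S k \<sigma> \<beta>"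
    and "respects_count V E S k \<pi> \<alpha>" and "respects_size V E S k \<pi> \<beta>"
  shows "imbalance V E \<sigma> = imbalance V E \<pi>"
    using lemma3_aux[OF assms(1,2,3,6,7,8,9,10,11,12)] .

end
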